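(* Let $r$ be a real number with $0<|r|<1$. Define $f_r(x):=\sum_{n=1}^\infty r^n\varphi^{(n)}(x)$ and $f_{r,N}(x):=\sum_{n=1}^{N-1}r^n\varphi^{(n)}(x)$ for $x\in[0,1]$, $N=1,2,\dots$. Then: (i) there is a nondegenerate random variable (i.e. a nonconstant Borel measurable function) $L_r$ on $[0,1]$ with $\int_0^1 L_r(x)\,dx=1$ such that $$\frac{f_r(x)-f_{r,N}(x)}{\frac12\sum_{n=N}^\infty r^n}\to L_r(x)\quad\text{in distribution as } N\to\infty$$ (with respect to Lebesgue measure on $[0,1]$); (ii) $$\lim_{N'\to\infty}\frac1{N'}\sum_{N=1}^{N'}\frac{f_r(x)-f_{r,N}(x)}{\frac12\sum_{n=N}^\infty r^n}=1$$ for Lebesgue-a.e. $x\in[0,1]$ and in $L^1([0,1])$.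
   Context: The tent map on $[0,1]$ is $\varphi(x)=2x$ for $x\in[0,1/2]$ and $\varphi(x)=2(1-x)$ for $x\in[1/2,1]$; it is extended to $\mathbb{R}$ by $\varphi(x):=\varphi(x-[x])$, and $\varphi^{(n)}$ denotes the $n$-fold iterate of $\varphi$, so that $\varphi^{(n)}(x)=\varphi(2^{n-1}x)$. *)

theory Defs
  imports "HOL-Probability.Probability"
begin

definition tent01 :: "real \<Rightarrow> real" where
  "tent01 x = (if x \<le> 1/2 then 2 * x else 2 * (1 - x))"

definition tent :: "real \<Rightarrow> real" where
  "tent x = tent01 (x - of_int \<lfloor>x\<rfloor>)"

definition tent_iter :: "nat \<Rightarrow> real \<Rightarrow> real" where
  "tent_iter n = tent ^^ n"

definition f_r :: "real \<Rightarrow> real \<Rightarrow> real" where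
  "f_r r x = (\<Sum>n. r ^ (Suc n) * tent_iter (Suc n) x)"

definition f_rN :: "real \<Rightarrow> nat \<Rightarrow> real \<Rightarrow> real" where
  "f_rN r N x = (\<Sum>n\<in>{1..<N}. r ^ n * tent_iter n x)"

definition remq :: "real \<Rightarrow> nat \<Rightarrow> real \<Rightarrow> real" where
  "remq r N x = (f_r r x - f_rN r N x) / ((1/2) * (\<Sum>n. r ^ (n + N)))"

definition unit_lebesgue :: "real measure" where
  "unit_lebesgue = restrict_space lborel {0..1}"

end

theory Submission
  imports Defs "HOL-Library.Discrete_Functions"
begin

lemma U_space[simp]: "space unit_lebesgue = {0..1}"
  by (simp add: unit_lebesgue_def space_restrict_space)

lemma U_sets_borel[measurable (raw)]: "f \<in> borel_measurable borel \<Longrightarrow> f \<in> borel_measurable unit_lebesgue"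
  unfolding unit_lebesgue_def
  by (simp add: measurable_restrict_space1)

lemma U_prob: "prob_space unit_lebesgue"
  unfolding unit_lebesgue_def
  by (intro prob_spaceI) (simp add: space_restrict_space emeasure_restrict_space)

interpretation U: prob_space unit_lebesgue by (rule U_prob)

lemma U_integral: "integral\<^sup>L unit_lebesgue (f::real\<Rightarrow>real) = (\<integral>x. indicator {0..1} x * f x \<partial>lborel)"
  unfolding unit_lebesgue_def by (simp add: integral_restrict_space)

lemma tent01_range: "0 \<le> x \<Longrightarrow> x \<le> 1 \<Longrightarrow> 0 \<le> tent01 x \<and> tent01 x \<le> 1"
  by (auto simp: tent01_def)

lemma tent_range: "0 \<le> tent x \<and> tent x \<le> 1"
  unfolding tent_def
  by (rule tent01_range) (auto simp: floor_le_iff  less_floor_iff, linarith)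

lemma tent_eq: "x \<in> {0..1} \<Longrightarrow> tent x = tent01 x"
proof -
  assume x: "x \<in> {0..1}"
  show ?thesis
  proof (cases "x = 1")
    case True then show ?thesis by (simp add: tent_def tent01_def)
  next
    case False
    with x have "\<lfloor>x\<rfloor> = 0" by (simp add: floor_eq_iff)
    then show ?thesis by (simp add: tent_def)
  qed
qed

lemma tent_sym: "x \<in> {0..1} \<Longrightarrow> tent (1 - x) = tent x"
  by (simp add: tent_eq tent01_def)

lemma tent_meas[measurable]: "tent \<in> borel_measurable borel"
  unfolding tent_def tent01_def by measurable

lemma tent_iter_meas[measurable]: "tent_iter n \<in> borel_measurable borel"
  unfolding tent_iter_def by (induction n) auto

lemma tent_iter_Suc: "tent_iter (Suc n) x = tent_iter n (tent x)"
  unfolding tent_iter_def by (simp add: funpow_swap1)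

lemma tent_iter_add: "tent_iter (n + m) x = tent_iter n (tent_iter m x)"
  unfolding tent_iter_def by (simp add: funpow_add)

lemma tent_iter_range: "n \<ge> 1 \<or> x \<in> {0..1} \<Longrightarrow> 0 \<le> tent_iter n x \<and> tent_iter n x \<le> 1"
  unfolding tent_iter_def by (cases n) (auto simp: tent_range)


lemma intU: assumes [measurable]: "(h::real\<Rightarrow>real) \<in> borel_measurable borel" and b: "\<forall>y\<in>{0..1}. \<bar>h y\<bar> \<le> B"
  shows "integrable unit_lebesgue h"
  by (rule U.integrable_const_bound[where B=B]) (auto simp: b AE_restrict_space_iff unit_lebesgue_def[symmetric])

lemma intU': assumes [measurable]: "(h::real\<Rightarrow>real) \<in> borel_measurable borel" and b: "\<forall>y\<in>{0..1}. \<bar>h y\<bar> \<le> B"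
  shows "integrable lborel (\<lambda>x. indicator {0..1} x * h x)"
proof -
  have "integrable unit_lebesgue h" by (rule intU[OF assms])
  then show ?thesis unfolding unit_lebesgue_def
    by (subst (asm) integrable_restrict_space) (auto simp: mult.commute)
qed

lemma pres:
  assumes h[measurable]: "(h::real\<Rightarrow>real) \<in> borel_measurable borel" and b: "\<forall>y\<in>{0..1}. \<bar>h y\<bar> \<le> B"
  shows "(\<integral>x. h (tent x) \<partial>unit_lebesgue) = (\<integral>x. h x \<partial>unit_lebesgue)"
proof -
  define f where "f = (\<lambda>x. indicator {0..1} x * h x)"
  have fi: "integrable lborel f" unfolding f_def by (rule intU'[OF assms])
  have fm[measurable]: "f \<in> borel_measurable borel" unfolding f_def by measurable
  have i1: "integrable lborel (\<lambda>x. f (0 + 2 * x))" by (rule lborel_integrable_real_affine[OF fi]) simp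
  have i2: "integrable lborel (\<lambda>x. f (2 + (-2) * x))" by (rule lborel_integrable_real_affine[OF fi]) simp
  have i3: "integrable lborel (\<lambda>x. indicator {1/2::real} x * h 1)"
    by (intro integrable_mult_left) (auto simp: integrable_indicator_iff)
  have e1: "(\<integral>x. f x \<partial>lborel) = 2 * (\<integral>x. f (0 + 2 * x) \<partial>lborel)"
    using lborel_integral_real_affine[of 2 f 0] by simp
  have e2: "(\<integral>x. f x \<partial>lborel) = 2 * (\<integral>x. f (2 + (-2) * x) \<partial>lborel)"
    using lborel_integral_real_affine[of "-2" f 2] by simp
  have e3: "(\<integral>x. indicator {1/2::real} x * h 1 \<partial>lborel) = 0"
    by simp
  have fv: "f y = (if y \<in> {0..1} then h y else 0)" for y unfolding f_def by simp
  have pw: "indicator {0..1} x * h (tent x) = f (0 + 2 * x) + f (2 + (-2) * x) - indicator {1/2::real} x * h 1" for x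
  proof -
    consider "x < 0" | "0 \<le> x" "x < 1/2" | "x = 1/2" | "1/2 < x" "x \<le> 1" | "1 < x" by linarith
    then show ?thesis
    proof cases
      case 1 then show ?thesis by (simp add: fv indicator_def)
    next
      case 2
      then have "tent x = 2 * x" by (simp add: tent_eq tent01_def)
      with 2 show ?thesis by (simp add: fv indicator_def)
    next
      case 3
      have "tent (1/2) = 1" by (simp add: tent_eq tent01_def)
      then show ?thesis unfolding 3 by (simp add: fv indicator_def)
    next
      case 4
      then have "tent x = 2 - 2 * x" by (simp add: tent_eq tent01_def)
      with 4 show ?thesis by (simp add: fv indicator_def)
    next
      case 5 then show ?thesis by (simp add: fv indicator_def)
    qed
  qed
  have "(\<integral>x. h (tent x) \<partial>unit_lebesgue) = (\<integral>x. indicator {0..1} x * h (tent x) \<partial>lborel)"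
    by (rule U_integral)
  also have "\<dots> = (\<integral>x. f (0 + 2 * x) + f (2 + (-2) * x) - indicator {1/2::real} x * h 1 \<partial>lborel)"
    by (simp only: pw)
  also have "\<dots> = (\<integral>x. f (0 + 2 * x) \<partial>lborel) + (\<integral>x. f (2 + (-2) * x) \<partial>lborel) - (\<integral>x. indicator {1/2::real} x * h 1 \<partial>lborel)"
    using i1 i2 i3 by simp
  also have "\<dots> = (\<integral>x. f x \<partial>lborel)" using e1 e2 e3 by simp
  also have "\<dots> = (\<integral>x. h x \<partial>unit_lebesgue)" unfolding f_def by (rule U_integral[symmetric])
  finally show ?thesis .
qed

lemma refl_int:
  assumes h[measurable]: "(h::real\<Rightarrow>real) \<in> borel_measurable borel"
  shows "(\<integral>x. h (1 - x) \<partial>unit_lebesgue) = (\<integral>x. h x \<partial>unit_lebesgue)"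
proof -
  define f where "f = (\<lambda>x. indicator {0..1} x * h x)"
  have "(\<integral>x. f x \<partial>lborel) = (\<integral>x. f (1 + (-1) * x) \<partial>lborel)"
    using lborel_integral_real_affine[of "-1" f 1] by simp
  moreover have ind: "indicator {0..1} (1 - x) = (indicator {0..1} x :: real)" for x :: real
    unfolding indicator_def by auto
  ultimately show ?thesis unfolding U_integral f_def by (simp add: ind)
qed

definition G :: "real \<Rightarrow> real \<Rightarrow> real" where
  "G r y = (\<Sum>k. r ^ k * tent_iter k y)"

lemma tent_iter_abs: "\<bar>tent_iter k y\<bar> \<le> \<bar>y\<bar> + 1"
proof (cases k)
  case 0 then show ?thesis by (simp add: tent_iter_def)
next
  case (Suc m)
  then have "0 \<le> tent_iter k y \<and> tent_iter k y \<le> 1" using tent_iter_range[of k y] by simp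
  then show ?thesis using abs_ge_zero[of y] by linarith
qed

lemma G_summable_abs:
  assumes "\<bar>r\<bar> < 1" shows "summable (\<lambda>k. norm (r ^ k * tent_iter k y))"
proof (rule summable_norm_comparison_test)
  show "\<exists>N. \<forall>n\<ge>N. norm (r ^ n * tent_iter n y) \<le> \<bar>r\<bar> ^ n * (\<bar>y\<bar> + 1)"
  proof (intro exI allI impI)
    fix n :: nat
    have "norm (r ^ n * tent_iter n y) = \<bar>r\<bar> ^ n * \<bar>tent_iter n y\<bar>" by (simp add: abs_mult power_abs)
    also have "\<dots> \<le> \<bar>r\<bar> ^ n * (\<bar>y\<bar> + 1)" by (rule mult_left_mono[OF tent_iter_abs]) simp
    finally show "norm (r ^ n * tent_iter n y) \<le> \<bar>r\<bar> ^ n * (\<bar>y\<bar> + 1)" .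
  qed
  show "summable (\<lambda>n. \<bar>r\<bar> ^ n * (\<bar>y\<bar> + 1))"
    using assms by (intro summable_mult2) simp
qed

lemma G_summable:
  assumes "\<bar>r\<bar> < 1" shows "summable (\<lambda>k. r ^ k * tent_iter k y)"
  by (rule summable_norm_cancel[OF G_summable_abs[OF assms]])

lemma G_rec:
  assumes "\<bar>r\<bar> < 1" shows "G r y = y + r * G r (tent y)"
proof -
  have "(\<Sum>k. r ^ Suc k * tent_iter (Suc k) y) = G r y - y"
    using suminf_split_head[OF G_summable[OF assms, of y]] by (simp add: G_def tent_iter_def)
  moreover have "(\<Sum>k. r ^ Suc k * tent_iter (Suc k) y) = r * G r (tent y)"
    unfolding G_def tent_iter_Suc
    by (subst suminf_mult[OF G_summable[OF assms], symmetric]) (simp add: algebra_simps)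
  ultimately show ?thesis by simp
qed

lemma G_bound:
  assumes "\<bar>r\<bar> < 1" "y \<in> {0..1}" shows "\<bar>G r y\<bar> \<le> 1 / (1 - \<bar>r\<bar>)"
proof -
  have "\<bar>G r y\<bar> \<le> (\<Sum>k. norm (r ^ k * tent_iter k y))"
    unfolding G_def using summable_norm[OF G_summable_abs[OF assms(1)]] by simp
  also have "\<dots> \<le> (\<Sum>k. \<bar>r\<bar> ^ k)"
  proof (rule suminf_le)
    fix k show "norm (r ^ k * tent_iter k y) \<le> \<bar>r\<bar> ^ k"
      using tent_iter_range[of k y] assms(2)
      by (auto simp: abs_mult power_abs intro!: mult_left_le)
  qed (use assms G_summable_abs in auto)
  also have "\<dots> = 1 / (1 - \<bar>r\<bar>)" using assms by (simp add: suminf_geometric)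
  finally show ?thesis .
qed

lemma G_meas[measurable]:
  assumes "\<bar>r\<bar> < 1" shows "G r \<in> borel_measurable borel"
proof (rule borel_measurable_LIMSEQ_real)
  fix y show "(\<lambda>n. \<Sum>k<n. r ^ k * tent_iter k y) \<longlonglongrightarrow> G r y"
    unfolding G_def using G_summable[OF assms] summable_LIMSEQ by blast
qed measurable

lemma remq_eq:
  assumes "0 < \<bar>r\<bar>" "\<bar>r\<bar> < 1" "N \<ge> 1"
  shows "remq r N x = 2 * (1 - r) * G r (tent_iter N x)"
proof -
  define a where "a n = r ^ n * tent_iter n x" for n
  have sa: "summable a" unfolding a_def by (rule G_summable[OF assms(2)])
  have fr: "f_r r x = suminf a - a 0"
    unfolding f_r_def a_def[symmetric] using suminf_split_head[OF sa] by simp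
  have s1: "suminf a = (\<Sum>n. a (n + N)) + (\<Sum>i<N. a i)" by (rule suminf_split_initial_segment[OF sa])
  have s2: "(\<Sum>i<N. a i) = a 0 + f_rN r N x"
  proof -
    have "{..<N} = insert 0 {1..<N}" using assms(3) by auto
    then show ?thesis unfolding f_rN_def a_def by simp
  qed
  have num: "f_r r x - f_rN r N x = r ^ N * G r (tent_iter N x)"
  proof -
    have "f_r r x - f_rN r N x = (\<Sum>n. a (n + N))" using fr s1 s2 by simp
    also have "\<dots> = (\<Sum>n. r ^ N * (r ^ n * tent_iter n (tent_iter N x)))"
      unfolding a_def by (simp add: tent_iter_add power_add algebra_simps)
    also have "\<dots> = r ^ N * G r (tent_iter N x)"
      unfolding G_def by (rule suminf_mult[OF G_summable[OF assms(2)]])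
    finally show ?thesis .
  qed
  have den: "(\<Sum>n. r ^ (n + N)) = r ^ N / (1 - r)"
  proof -
    have "(\<Sum>n. r ^ (n + N)) = (\<Sum>n. r ^ N * r ^ n)" by (simp add: power_add mult.commute)
    also have "\<dots> = r ^ N * (1 / (1 - r))"
      using assms by (subst suminf_mult) (auto simp: suminf_geometric)
    finally show ?thesis by simp
  qed
  have "r \<noteq> 0" "1 - r \<noteq> 0" using assms by auto
  then show ?thesis unfolding remq_def num den by (simp add: field_simps)
qed

definition V :: "real \<Rightarrow> real \<Rightarrow> real" where
  "V r y = 2 * (1 - r) * G r y - 1"

lemma V_meas[measurable]: "\<bar>r\<bar> < 1 \<Longrightarrow> V r \<in> borel_measurable borel"
  unfolding V_def by measurable

lemma V_rec: "\<bar>r\<bar> < 1 \<Longrightarrow> V r y = 2 * (1 - r) * (y - 1/2) + r * V r (tent y)"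
  unfolding V_def by (subst G_rec) (auto simp: algebra_simps)

lemma V_bound:
  assumes "\<bar>r\<bar> < 1" "y \<in> {0..1}" shows "\<bar>V r y\<bar> \<le> 4 / (1 - \<bar>r\<bar>) + 1"
proof -
  have g: "\<bar>G r y\<bar> \<le> 1 / (1 - \<bar>r\<bar>)" by (rule G_bound[OF assms])
  have "\<bar>2 * (1 - r) * G r y\<bar> = 2 * \<bar>1 - r\<bar> * \<bar>G r y\<bar>" by (simp only: abs_mult abs_numeral)
  also have "\<dots> \<le> 2 * 2 * (1 / (1 - \<bar>r\<bar>))"
    using assms(1) g by (intro mult_mono) auto
  finally show ?thesis unfolding V_def by simp
qed

lemma tent_iter_in: "y \<in> {0..1} \<Longrightarrow> tent_iter n y \<in> {0..1}"
  using tent_iter_range[of n y] by auto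

lemma pres_iter:
  assumes h[measurable]: "(h::real\<Rightarrow>real) \<in> borel_measurable borel" and b: "\<forall>y\<in>{0..1}. \<bar>h y\<bar> \<le> B"
  shows "(\<integral>x. h (tent_iter n x) \<partial>unit_lebesgue) = (\<integral>x. h x \<partial>unit_lebesgue)"
proof (induction n)
  case 0 then show ?case by (simp add: tent_iter_def)
next
  case (Suc n)
  have "(\<integral>x. h (tent_iter (Suc n) x) \<partial>unit_lebesgue) = (\<integral>x. (\<lambda>z. h (tent_iter n z)) (tent x) \<partial>unit_lebesgue)"
    by (simp add: tent_iter_Suc)
  also have "\<dots> = (\<integral>x. h (tent_iter n x) \<partial>unit_lebesgue)"
    by (rule pres[where B=B]) (use b tent_iter_in in auto)
  finally show ?case using Suc by simp
qed

lemma int_lin: "(\<integral>x. x - 1/2 \<partial>unit_lebesgue) = 0"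
proof -
  have "(\<integral>x. (\<lambda>y. y - 1/2) (1 - x) \<partial>unit_lebesgue) = (\<integral>x. x - 1/2 \<partial>unit_lebesgue)"
    by (rule refl_int) simp
  moreover have eq: "(\<lambda>x. (\<lambda>y. y - 1/2) (1 - x)) = (\<lambda>x. - (x - 1/2 :: real))" by (rule ext) simp
  moreover have "(\<integral>x. (\<lambda>y. y - 1/2) (1 - x) \<partial>unit_lebesgue) = - (\<integral>x. x - 1/2 \<partial>unit_lebesgue)"
    unfolding eq by (rule integral_minus)
  ultimately show ?thesis by simp
qed

lemma int_sq: "(\<integral>x. (x - 1/2)^2 \<partial>unit_lebesgue) = 1/12"
proof -
  have "(\<integral>x. (x - 1/2)^2 \<partial>unit_lebesgue) = (\<integral>x. (x - 1/2)^2 * indicator {0..1} x \<partial>lborel)"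
    unfolding U_integral by (simp add: mult.commute)
  also have "\<dots> = (1 - 1/2)^3/3 - (0 - 1/2)^3/3"
    by (rule integral_FTC_Icc_real[where F="\<lambda>x. (x - 1/2)^3/3"])
       (auto intro!: derivative_eq_intros simp: power2_eq_square)
  also have "\<dots> = 1/12" by (simp add: power3_eq_cube)
  finally show ?thesis by simp
qed


definition BV :: "real \<Rightarrow> real" where "BV r = 4 / (1 - \<bar>r\<bar>) + 1"

lemma VB: "\<bar>r\<bar> < 1 \<Longrightarrow> y \<in> {0..1} \<Longrightarrow> \<bar>V r (tent_iter j y)\<bar> \<le> BV r"
  unfolding BV_def by (rule V_bound[OF _ tent_iter_in])

lemma VB0: "\<bar>r\<bar> < 1 \<Longrightarrow> y \<in> {0..1} \<Longrightarrow> \<bar>V r y\<bar> \<le> BV r"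
  unfolding BV_def by (rule V_bound)

lemma BV_pos: "\<bar>r\<bar> < 1 \<Longrightarrow> 0 \<le> BV r"
  unfolding BV_def by simp

lemma int_Vj: "\<bar>r\<bar> < 1 \<Longrightarrow> integrable unit_lebesgue (\<lambda>y. V r (tent_iter j y))"
  by (rule intU[where B="BV r"]) (auto intro: VB)

lemma int_lin_i: "integrable unit_lebesgue (\<lambda>y. y - 1/2 :: real)"
  by (rule intU[where B=1]) auto

lemma int_VV: assumes "\<bar>r\<bar> < 1" shows "integrable unit_lebesgue (\<lambda>y. V r (tent_iter i y) * V r (tent_iter j y))"
proof (rule intU[where B="BV r * BV r"])
  show "\<forall>y\<in>{0..1}. \<bar>V r (tent_iter i y) * V r (tent_iter j y)\<bar> \<le> BV r * BV r"
    using VB[OF assms] BV_pos[OF assms] by (auto simp: abs_mult intro!: mult_mono)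
qed (use assms in measurable)

lemma int_linV: assumes "\<bar>r\<bar> < 1" shows "integrable unit_lebesgue (\<lambda>y. (y - 1/2) * V r (tent_iter j y))"
proof (rule intU[where B="1 * BV r"])
  show "\<forall>y\<in>{0..1}. \<bar>(y - 1/2) * V r (tent_iter j y)\<bar> \<le> 1 * BV r"
  proof
    fix y :: real assume y: "y \<in> {0..1}"
    have "\<bar>y - 1/2\<bar> * \<bar>V r (tent_iter j y)\<bar> \<le> 1 * BV r"
      using VB[OF assms y] BV_pos[OF assms] y by (intro mult_mono) auto
    then show "\<bar>(y - 1/2) * V r (tent_iter j y)\<bar> \<le> 1 * BV r" by (simp add: abs_mult)
  qed
qed (use assms in measurable)

lemma int_V: assumes r: "\<bar>r\<bar> < 1" shows "(\<integral>y. V r y \<partial>unit_lebesgue) = 0"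
proof -
  have i1: "integrable unit_lebesgue (\<lambda>y. V r (tent y))"
    using int_Vj[OF r, of 1] by (simp add: tent_iter_def)
  have "(\<integral>y. V r y \<partial>unit_lebesgue) = (\<integral>y. 2 * (1 - r) * (y - 1/2) + r * V r (tent y) \<partial>unit_lebesgue)"
    by (rule arg_cong[where f="integral\<^sup>L unit_lebesgue"]) (rule ext, rule V_rec[OF r])
  also have "\<dots> = 2 * (1 - r) * (\<integral>y. y - 1/2 \<partial>unit_lebesgue) + r * (\<integral>y. V r (tent y) \<partial>unit_lebesgue)"
    using int_lin_i i1 by simp
  also have "(\<integral>y. V r (tent y) \<partial>unit_lebesgue) = (\<integral>y. V r y \<partial>unit_lebesgue)"
    by (rule pres[where B="BV r"]) (use r VB0 in auto)
  finally have "(1 - r) * (\<integral>y. V r y \<partial>unit_lebesgue) = 0" by (simp add: int_lin algebra_simps)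
  moreover have "r \<noteq> 1" using r by auto
  ultimately show ?thesis by simp
qed

lemma cross: assumes r: "\<bar>r\<bar> < 1" and j: "j \<ge> 1"
  shows "(\<integral>y. (y - 1/2) * V r (tent_iter j y) \<partial>unit_lebesgue) = 0"
proof -
  define h where "h y = (y - 1/2) * V r (tent_iter j y)" for y
  have hm[measurable]: "h \<in> borel_measurable borel" unfolding h_def using r by measurable
  have sym: "tent_iter j (1 - y) = tent_iter j y" if "y \<in> {0..1}" for y
  proof -
    obtain k where "j = Suc k" using j by (cases j) auto
    then show ?thesis using tent_sym[OF that] by (simp add: tent_iter_Suc)
  qed
  have "(\<integral>y. h (1 - y) \<partial>unit_lebesgue) = (\<integral>y. h y \<partial>unit_lebesgue)" by (rule refl_int[OF hm])
  moreover have "(\<integral>y. h (1 - y) \<partial>unit_lebesgue) = (\<integral>y. - h y \<partial>unit_lebesgue)"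
    by (rule Bochner_Integration.integral_cong) (auto simp: h_def sym algebra_simps)
  ultimately show ?thesis unfolding h_def by simp
qed

lemma abs_prod_le: "\<bar>a\<bar> \<le> B \<Longrightarrow> \<bar>b\<bar> \<le> C \<Longrightarrow> \<bar>a * b\<bar> \<le> B * (C::real)"
  unfolding abs_mult by (rule mult_mono) auto

definition sig :: "real \<Rightarrow> real" where "sig r = (\<integral>y. V r y * V r y \<partial>unit_lebesgue)"

lemma corr: assumes r: "\<bar>r\<bar> < 1"
  shows "(\<integral>y. V r y * V r (tent_iter d y) \<partial>unit_lebesgue) = r ^ d * sig r"
proof (induction d)
  case 0 then show ?case by (simp add: sig_def tent_iter_def)
next
  case (Suc d)
  have pt: "V r y * V r (tent_iter (Suc d) y) = 2*(1-r)*((y-1/2)*V r (tent_iter (Suc d) y)) + r*((\<lambda>z. V r z * V r (tent_iter d z)) (tent y))" for y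
  proof -
    have v: "V r y = 2*(1-r)*(y-1/2) + r*V r (tent y)" by (rule V_rec[OF r])
    show ?thesis by (simp only: v tent_iter_Suc) (simp add: distrib_right mult.assoc)
  qed
  have i2: "integrable unit_lebesgue (\<lambda>y. (\<lambda>z. V r z * V r (tent_iter d z)) (tent y))"
    using int_VV[OF r, of 1 "Suc d"] by (simp add: tent_iter_def funpow_swap1)
  have "(\<integral>y. V r y * V r (tent_iter (Suc d) y) \<partial>unit_lebesgue)
      = 2*(1-r)*(\<integral>y. (y-1/2)*V r (tent_iter (Suc d) y) \<partial>unit_lebesgue) + r*(\<integral>y. (\<lambda>z. V r z * V r (tent_iter d z)) (tent y) \<partial>unit_lebesgue)"
    unfolding pt using int_linV[OF r] i2 by simp
  also have "(\<integral>y. (y-1/2)*V r (tent_iter (Suc d) y) \<partial>unit_lebesgue) = 0" by (rule cross[OF r]) simp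
  also have "(\<integral>y. (\<lambda>z. V r z * V r (tent_iter d z)) (tent y) \<partial>unit_lebesgue) = (\<integral>z. V r z * V r (tent_iter d z) \<partial>unit_lebesgue)"
  proof (rule pres[where B="BV r * BV r"])
    show "\<forall>y\<in>{0..1}. \<bar>V r y * V r (tent_iter d y)\<bar> \<le> BV r * BV r"
      using VB[OF r] VB0[OF r] BV_pos[OF r] by (auto simp: abs_mult intro!: mult_mono)
  qed (use r in measurable)
  finally show ?case using Suc by simp
qed

lemma sig_eq: assumes r: "\<bar>r\<bar> < 1" shows "sig r * (1 - r^2) = (1 - r)^2 / 3"
proof -
  define Q where "Q = (\<lambda>z. V r z * V r z)"
  have pt: "V r y * V r y = 4*(1-r)^2*((y-1/2)^2) + 4*(1-r)*r*((y-1/2)*V r (tent_iter 1 y)) + r^2 * (Q (tent y))" for y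
  proof -
    have v: "V r y = 2*(1-r)*(y-1/2) + r*V r (tent y)" by (rule V_rec[OF r])
    have t: "tent_iter 1 y = tent y" by (simp add: tent_iter_def)
    define W where "W = V r (tent y)"
    have v': "V r y = 2*(1-r)*(y-1/2) + r*W" unfolding W_def by (rule v)
    show ?thesis unfolding t W_def[symmetric] v' Q_def by algebra
  qed
  have i1: "integrable unit_lebesgue (\<lambda>y. (y - 1/2)^2 :: real)"
    by (rule intU[where B=1]) (auto simp: abs_square_le_1 abs_le_iff)
  have i2: "integrable unit_lebesgue (\<lambda>y. Q (tent y))"
    using int_VV[OF r, of 1 1] by (simp add: tent_iter_def Q_def)
  have "sig r = 4*(1-r)^2*(\<integral>y. (y-1/2)^2 \<partial>unit_lebesgue) + 4*(1-r)*r*(\<integral>y. (y-1/2)*V r (tent_iter 1 y) \<partial>unit_lebesgue) + r^2*(\<integral>y. Q (tent y) \<partial>unit_lebesgue)"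
    unfolding sig_def pt using int_linV[OF r] i1 i2 by simp
  also have "(\<integral>y. (y-1/2)*V r (tent_iter 1 y) \<partial>unit_lebesgue) = 0" by (rule cross[OF r]) simp
  also have "(\<integral>y. Q (tent y) \<partial>unit_lebesgue) = sig r"
    unfolding sig_def Q_def
  proof (rule pres[where B="BV r * BV r"])
    show "\<forall>y\<in>{0..1}. \<bar>V r y * V r y\<bar> \<le> BV r * BV r"
      using VB0[OF r] abs_prod_le by blast
  qed (use r in measurable)
  finally have "sig r = 4*(1-r)^2*(1/12) + r^2 * sig r" by (simp add: int_sq)
  then show ?thesis by (simp add: algebra_simps)
qed

lemma U_prob1: "measure unit_lebesgue {0..1} = 1"
  by (metis U.prob_space U_space)

lemma distr_eq_int:
  assumes f[measurable]: "f \<in> borel_measurable unit_lebesgue" and g[measurable]: "g \<in> borel_measurable unit_lebesgue"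
    and eq: "\<And>A. A \<in> sets borel \<Longrightarrow> (\<integral>x. indicator A (f x) \<partial>unit_lebesgue) = (\<integral>x. indicator A (g x) \<partial>unit_lebesgue :: real)"
  shows "distr unit_lebesgue borel f = distr unit_lebesgue borel (g :: real \<Rightarrow> real)"
proof (rule measure_eqI)
  show "sets (distr unit_lebesgue borel f) = sets (distr unit_lebesgue borel g)" by simp
next
  fix A assume "A \<in> sets (distr unit_lebesgue borel f)"
  then have A[measurable]: "A \<in> sets borel" by simp
  have m: "measure unit_lebesgue (h -` A \<inter> {0..1}) = (\<integral>x. indicator A (h x) \<partial>unit_lebesgue)"
    if [measurable]: "h \<in> borel_measurable unit_lebesgue" for h :: "real \<Rightarrow> real"
  proof -
    have "(\<integral>x. indicator A (h x) \<partial>unit_lebesgue) = (\<integral>x. indicator (h -` A \<inter> space unit_lebesgue) x \<partial>unit_lebesgue :: real)"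
      by (rule Bochner_Integration.integral_cong) (auto simp: indicator_def)
    also have "\<dots> = measure unit_lebesgue (h -` A \<inter> space unit_lebesgue)"
      by (simp add: Int_absorb2)
    finally show ?thesis by simp
  qed
  note m = m[unfolded U_space]
  have "emeasure (distr unit_lebesgue borel f) A = emeasure unit_lebesgue (f -` A \<inter> space unit_lebesgue)"
    by (rule emeasure_distr) auto
  also have "\<dots> = ennreal (\<integral>x. indicator A (f x) \<partial>unit_lebesgue)"
    by (simp add: U.emeasure_eq_measure m[OF f])
  also have "\<dots> = ennreal (\<integral>x. indicator A (g x) \<partial>unit_lebesgue)" by (simp add: eq[OF A])
  also have "\<dots> = emeasure unit_lebesgue (g -` A \<inter> space unit_lebesgue)"
    by (simp add: U.emeasure_eq_measure m[OF g])
  also have "\<dots> = emeasure (distr unit_lebesgue borel g) A"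
    by (rule emeasure_distr[symmetric]) auto
  finally show "emeasure (distr unit_lebesgue borel f) A = emeasure (distr unit_lebesgue borel g) A" .
qed

lemma remqN:
  assumes "0 < \<bar>r\<bar>" "\<bar>r\<bar> < 1" "N \<ge> 1"
  shows "remq r N = (\<lambda>x. V r (tent_iter N x) + 1)"
  by (rule ext) (simp add: remq_eq[OF assms] V_def)

lemma remq_meas[measurable]:
  assumes "0 < \<bar>r\<bar>" "\<bar>r\<bar> < 1" "N \<ge> 1"
  shows "remq r N \<in> borel_measurable unit_lebesgue"
  unfolding remqN[OF assms] using assms(2) by measurable

lemma part1:
  assumes r0: "0 < \<bar>r\<bar>" and r: "\<bar>r\<bar> < 1"
  shows "\<exists>L :: real \<Rightarrow> real.
            L \<in> borel_measurable unit_lebesgue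
          \<and> \<not> (\<exists>c. AE x in unit_lebesgue. L x = c)
          \<and> integrable unit_lebesgue L
          \<and> integral\<^sup>L unit_lebesgue L = 1
          \<and> weak_conv_m (\<lambda>N. distr unit_lebesgue borel (remq r N))
                        (distr unit_lebesgue borel L)"
proof (intro exI conjI)
  let ?L = "remq r 1"
  have L: "?L = (\<lambda>x. V r (tent_iter 1 x) + 1)" by (rule remqN[OF r0 r]) simp
  show Lm: "?L \<in> borel_measurable unit_lebesgue" by (rule remq_meas[OF r0 r]) simp
  have Vi: "integrable unit_lebesgue (\<lambda>x. V r (tent_iter 1 x))" by (rule int_Vj[OF r])
  show "integrable unit_lebesgue ?L" unfolding L using Vi by simp
  have iV: "(\<integral>x. V r (tent_iter 1 x) \<partial>unit_lebesgue) = 0"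
    using pres_iter[where h="V r" and B="BV r" and n=1] r VB0[OF r] int_V[OF r] by simp
  show int1: "integral\<^sup>L unit_lebesgue ?L = 1" unfolding L using Vi iV by (simp add: U_prob1)
  show "\<not> (\<exists>c. AE x in unit_lebesgue. ?L x = c)"
  proof
    assume "\<exists>c. AE x in unit_lebesgue. ?L x = c"
    then obtain c where c: "AE x in unit_lebesgue. ?L x = c" by blast
    have "integral\<^sup>L unit_lebesgue ?L = (\<integral>x. c \<partial>unit_lebesgue)"
      by (rule integral_cong_AE) (use Lm c in auto)
    then have "c = 1" using int1 by (simp add: U_prob1)
    with c have ae: "AE x in unit_lebesgue. V r (tent_iter 1 x) * V r (tent_iter 1 x) = 0"
      unfolding L by auto
    have "(\<integral>x. V r (tent_iter 1 x) * V r (tent_iter 1 x) \<partial>unit_lebesgue) = (\<integral>x. 0 \<partial>unit_lebesgue)"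
      by (rule integral_cong_AE) (use ae r in auto)
    moreover have "(\<integral>x. V r (tent_iter 1 x) * V r (tent_iter 1 x) \<partial>unit_lebesgue) = sig r"
      unfolding sig_def
    proof (rule pres_iter[where h="\<lambda>y. V r y * V r y" and B="BV r * BV r"])
      show "\<forall>y\<in>{0..1}. \<bar>V r y * V r y\<bar> \<le> BV r * BV r"
        using VB0[OF r] abs_prod_le by blast
    qed (use r in measurable)
    moreover have "sig r \<noteq> 0"
    proof
      assume "sig r = 0"
      then have "(1 - r)^2 / 3 = 0" using sig_eq[OF r] by simp
      then show False using r by simp
    qed
    ultimately show False by simp
  qed
  have de: "distr unit_lebesgue borel (remq r (Suc n)) = distr unit_lebesgue borel ?L" for n
  proof (rule distr_eq_int)
    show "remq r (Suc n) \<in> borel_measurable unit_lebesgue" by (rule remq_meas[OF r0 r]) simp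
    show "?L \<in> borel_measurable unit_lebesgue" by (rule Lm)
    fix A :: "real set" assume A[measurable]: "A \<in> sets borel"
    have pk: "(\<integral>x. indicator A (V r (tent_iter k x) + 1) \<partial>unit_lebesgue) = (\<integral>x. indicator A (V r x + 1) \<partial>unit_lebesgue :: real)" for k
      by (rule pres_iter[where h="\<lambda>y. indicator A (V r y + 1)" and B=1]) (use r in \<open>auto simp: indicator_def\<close>)
    then show "(\<integral>x. indicator A (remq r (Suc n) x) \<partial>unit_lebesgue) = (\<integral>x. indicator A (?L x) \<partial>unit_lebesgue :: real)"
    proof -
      have e1: "remq r (Suc n) = (\<lambda>x. V r (tent_iter (Suc n) x) + 1)" by (rule remqN[OF r0 r]) simp
      show ?thesis unfolding e1 L by (simp only: pk)
    qed
  qed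
  show "weak_conv_m (\<lambda>N. distr unit_lebesgue borel (remq r N)) (distr unit_lebesgue borel ?L)"
    unfolding weak_conv_m_def weak_conv_def
  proof (intro allI impI)
    fix x
    show "(\<lambda>n. cdf (distr unit_lebesgue borel (remq r n)) x) \<longlonglongrightarrow> cdf (distr unit_lebesgue borel ?L) x"
    proof (rule LIMSEQ_imp_Suc)
      have "(\<lambda>n. cdf (distr unit_lebesgue borel (remq r (Suc n))) x) = (\<lambda>n. cdf (distr unit_lebesgue borel ?L) x)"
        by (rule ext) (rule arg_cong[OF de])
      then show "(\<lambda>n. cdf (distr unit_lebesgue borel (remq r (Suc n))) x) \<longlonglongrightarrow> cdf (distr unit_lebesgue borel ?L) x"
        by (simp only:) (rule tendsto_const)
    qed
  qed
qed

definition Z :: "real \<Rightarrow> nat \<Rightarrow> real \<Rightarrow> real" where "Z r N x = V r (tent_iter N x)"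
definition S :: "real \<Rightarrow> nat \<Rightarrow> real \<Rightarrow> real" where "S r M x = (\<Sum>N\<in>{1..M}. Z r N x)"
definition DD :: "nat \<Rightarrow> nat \<Rightarrow> nat" where "DD N K = (if N \<le> K then K - N else N - K)"

lemma Z_meas[measurable]: "\<bar>r\<bar> < 1 \<Longrightarrow> Z r N \<in> borel_measurable borel"
  unfolding Z_def by measurable

lemma S_meas[measurable]: "\<bar>r\<bar> < 1 \<Longrightarrow> S r M \<in> borel_measurable borel"
  unfolding S_def Z_def by measurable

lemma avg_eq:
  assumes "0 < \<bar>r\<bar>" "\<bar>r\<bar> < 1" "M \<ge> 1"
  shows "(\<Sum>N\<in>{1..M}. remq r N x) / real M = S r M x / real M + 1"
proof -
  have "(\<Sum>N\<in>{1..M}. remq r N x) = (\<Sum>N\<in>{1..M}. Z r N x + 1)"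
    by (rule sum.cong) (auto simp: remqN[OF assms(1,2)] Z_def)
  also have "\<dots> = S r M x + real M" by (simp add: S_def sum.distrib)
  finally show ?thesis using assms(3) by (simp add: field_simps)
qed

lemma sig_nonneg: "0 \<le> sig r"
  unfolding sig_def by (rule integral_nonneg_AE) auto

lemma ZZ:
  assumes r: "\<bar>r\<bar> < 1" and NK: "N \<le> K"
  shows "(\<integral>x. Z r N x * Z r K x \<partial>unit_lebesgue) = r ^ (K - N) * sig r"
proof -
  have "(\<integral>x. Z r N x * Z r K x \<partial>unit_lebesgue) = (\<integral>x. (\<lambda>y. V r y * V r (tent_iter (K - N) y)) (tent_iter N x) \<partial>unit_lebesgue)"
  proof (rule Bochner_Integration.integral_cong[OF refl])
    fix x
    have "tent_iter K x = tent_iter (K - N) (tent_iter N x)" using NK tent_iter_add[of "K - N" N x] by simp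
    then show "Z r N x * Z r K x = (\<lambda>y. V r y * V r (tent_iter (K - N) y)) (tent_iter N x)"
      by (simp add: Z_def)
  qed
  also have "\<dots> = (\<integral>y. V r y * V r (tent_iter (K - N) y) \<partial>unit_lebesgue)"
  proof (rule pres_iter[where B="BV r * BV r"])
    show "\<forall>y\<in>{0..1}. \<bar>V r y * V r (tent_iter (K - N) y)\<bar> \<le> BV r * BV r"
      using VB0[OF r] VB[OF r] abs_prod_le by blast
  qed (use r in measurable)
  also have "\<dots> = r ^ (K - N) * sig r" by (rule corr[OF r])
  finally show ?thesis .
qed

lemma ZZabs:
  assumes r: "\<bar>r\<bar> < 1"
  shows "\<bar>\<integral>x. Z r N x * Z r K x \<partial>unit_lebesgue\<bar> \<le> \<bar>r\<bar> ^ DD N K * sig r"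
proof (cases "N \<le> K")
  case True then show ?thesis using ZZ[OF r True] sig_nonneg by (simp add: DD_def abs_mult power_abs)
next
  case False
  then have "(\<integral>x. Z r N x * Z r K x \<partial>unit_lebesgue) = (\<integral>x. Z r K x * Z r N x \<partial>unit_lebesgue)"
    by (simp add: mult.commute)
  also have "\<dots> = r ^ (N - K) * sig r" using False by (intro ZZ[OF r]) simp
  finally show ?thesis using False sig_nonneg by (simp add: DD_def abs_mult power_abs)
qed

lemma geo_part:
  assumes q: "0 \<le> q" "q < (1::real)" and inj: "inj_on g A" and fin: "finite A"
  shows "(\<Sum>K\<in>A. q ^ g K) \<le> 1 / (1 - q)"
proof -
  have "(\<Sum>K\<in>A. q ^ g K) = (\<Sum>j\<in>g ` A. q ^ j)" by (simp add: sum.reindex[OF inj])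
  also have "\<dots> \<le> (\<Sum>j. q ^ j)"
    by (rule sum_le_suminf) (use q fin in auto)
  also have "\<dots> = 1 / (1 - q)" using q by (simp add: suminf_geometric)
  finally show ?thesis .
qed

lemma geo:
  assumes q: "0 \<le> q" "q < (1::real)"
  shows "(\<Sum>K\<in>{1..M}. q ^ DD N K) \<le> 2 / (1 - q)"
proof -
  let ?A = "{1..M} \<inter> {K. N \<le> K}" and ?B = "{1..M} - {K. N \<le> K}"
  have "(\<Sum>K\<in>{1..M}. q ^ DD N K) = (\<Sum>K\<in>?A. q ^ DD N K) + (\<Sum>K\<in>?B. q ^ DD N K)"
    by (rule sum.Int_Diff) simp
  also have "(\<Sum>K\<in>?A. q ^ DD N K) = (\<Sum>K\<in>?A. q ^ (K - N))" by (rule sum.cong) (auto simp: DD_def)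
  also have "(\<Sum>K\<in>?B. q ^ DD N K) = (\<Sum>K\<in>?B. q ^ (N - K))" by (rule sum.cong) (auto simp: DD_def)
  also have "(\<Sum>K\<in>?A. q ^ (K - N)) \<le> 1 / (1 - q)"
    by (rule geo_part[OF q]) (auto simp: inj_on_def)
  also have "(\<Sum>K\<in>?B. q ^ (N - K)) \<le> 1 / (1 - q)"
    by (rule geo_part[OF q]) (auto simp: inj_on_def)
  finally show ?thesis by simp
qed


lemma int_ZZ: "\<bar>r\<bar> < 1 \<Longrightarrow> integrable unit_lebesgue (\<lambda>x. Z r N x * Z r K x)"
  unfolding Z_def by (rule int_VV)

lemma S2:
  assumes r: "\<bar>r\<bar> < 1"
  shows "(\<integral>x. (S r M x)^2 \<partial>unit_lebesgue) \<le> 2 * sig r / (1 - \<bar>r\<bar>) * real M"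
proof -
  have sq: "(S r M x)^2 = (\<Sum>N\<in>{1..M}. \<Sum>K\<in>{1..M}. Z r N x * Z r K x)" for x
    unfolding S_def power2_eq_square by (rule sum_product)
  have "(\<integral>x. (S r M x)^2 \<partial>unit_lebesgue) = (\<Sum>N\<in>{1..M}. \<Sum>K\<in>{1..M}. \<integral>x. Z r N x * Z r K x \<partial>unit_lebesgue)"
    unfolding sq
    by (subst Bochner_Integration.integral_sum) (auto intro!: Bochner_Integration.integral_sum Bochner_Integration.integrable_sum int_ZZ[OF r] sum.cong)
  also have "\<dots> \<le> (\<Sum>N\<in>{1..M}. \<Sum>K\<in>{1..M}. \<bar>r\<bar> ^ DD N K * sig r)"
    by (intro sum_mono) (rule order.trans[OF abs_ge_self ZZabs[OF r]])
  also have "\<dots> = (\<Sum>N\<in>{1..M}. sig r * (\<Sum>K\<in>{1..M}. \<bar>r\<bar> ^ DD N K))"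
    by (simp add: sum_distrib_left mult.commute)
  also have "\<dots> \<le> (\<Sum>N\<in>{1..M}. sig r * (2 / (1 - \<bar>r\<bar>)))"
    by (intro sum_mono mult_left_mono geo sig_nonneg) (use r in auto)
  also have "\<dots> = 2 * sig r / (1 - \<bar>r\<bar>) * real M" by simp
  finally show ?thesis .
qed


lemma S_bound:
  assumes r: "\<bar>r\<bar> < 1" and x: "x \<in> {0..1}"
  shows "\<bar>S r M x\<bar> \<le> real M * BV r"
proof -
  have "\<bar>S r M x\<bar> \<le> (\<Sum>N\<in>{1..M}. \<bar>Z r N x\<bar>)" unfolding S_def by (rule sum_abs)
  also have "\<dots> \<le> (\<Sum>N\<in>{1..M}. BV r)" by (intro sum_mono) (simp add: Z_def VB[OF r x])
  also have "\<dots> = real M * BV r" by simp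
  finally show ?thesis .
qed

lemma int_S: "\<bar>r\<bar> < 1 \<Longrightarrow> integrable unit_lebesgue (S r M)"
  by (rule intU[where B="real M * BV r"]) (auto intro: S_bound)

lemma int_SS: assumes r: "\<bar>r\<bar> < 1" shows "integrable unit_lebesgue (\<lambda>x. S r M x * S r M x)"
proof (rule intU[where B="(real M * BV r) * (real M * BV r)"])
  show "\<forall>y\<in>{0..1}. \<bar>S r M y * S r M y\<bar> \<le> (real M * BV r) * (real M * BV r)"
    using S_bound[OF r] abs_prod_le by blast
qed (use r in measurable)

lemma abs_le_quad:
  fixes u e :: real assumes e: "0 < e" shows "\<bar>u\<bar> \<le> e/4 + u*u/e"
proof -
  have "0 \<le> (\<bar>u\<bar> - e/2) * (\<bar>u\<bar> - e/2)" by simp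
  then have "e * \<bar>u\<bar> \<le> e*e/4 + \<bar>u\<bar>*\<bar>u\<bar>" by (simp add: algebra_simps)
  then have "e * \<bar>u\<bar> \<le> e*e/4 + u*u" by (simp add: abs_mult_self_eq)
  then have "\<bar>u\<bar> \<le> (e*e/4 + u*u) / e" using e by (simp add: pos_le_divide_eq mult.commute)
  also have "\<dots> = e/4 + u*u/e" using e by (simp add: field_simps)
  finally show ?thesis .
qed

lemma L1conv:
  assumes r: "\<bar>r\<bar> < 1"
  shows "(\<lambda>M. \<integral>x. \<bar>S r M x / real M\<bar> \<partial>unit_lebesgue) \<longlonglongrightarrow> 0"
proof (rule LIMSEQ_I)
  fix e :: real assume e: "0 < e"
  define C where "C = 2 * sig r / (1 - \<bar>r\<bar>)"
  have C0: "0 \<le> C" unfolding C_def using r sig_nonneg by simp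
  obtain no :: nat where no: "no \<ge> 4 * C / (e * e) + 1" using real_arch_simple by blast
  show "\<exists>no. \<forall>M\<ge>no. norm ((\<integral>x. \<bar>S r M x / real M\<bar> \<partial>unit_lebesgue) - 0) < e"
  proof (intro exI allI impI)
    fix M assume M: "no \<le> M"
    have "0 \<le> 4 * C / (e * e)" using C0 e by simp
    then have Mpos: "real M \<ge> 1" and MC: "real M \<ge> 4 * C / (e * e)" using no M by auto
    have i1: "integrable unit_lebesgue (\<lambda>x. \<bar>S r M x / real M\<bar>)"
      using int_S[OF r] by simp
    have i2: "integrable unit_lebesgue (\<lambda>x. e/4 + S r M x * S r M x / (real M * real M) / e)"
      using int_SS[OF r] by simp
    have "(\<integral>x. \<bar>S r M x / real M\<bar> \<partial>unit_lebesgue) \<le> (\<integral>x. e/4 + S r M x * S r M x / (real M * real M) / e \<partial>unit_lebesgue)"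
    proof (rule integral_mono[OF i1 i2])
      fix x
      show "\<bar>S r M x / real M\<bar> \<le> e/4 + S r M x * S r M x / (real M * real M) / e"
        using abs_le_quad[OF e, of "S r M x / real M"] by simp
    qed
    also have "\<dots> = e/4 + (\<integral>x. S r M x * S r M x \<partial>unit_lebesgue) / (real M * real M) / e"
      using int_SS[OF r] by (simp add: U_prob1)
    also have "(\<integral>x. S r M x * S r M x \<partial>unit_lebesgue) \<le> C * real M"
      using S2[OF r, of M] unfolding C_def by (simp add: power2_eq_square)
    then have "(\<integral>x. S r M x * S r M x \<partial>unit_lebesgue) / (real M * real M) / e \<le> C * real M / (real M * real M) / e"
      using e Mpos by (intro divide_right_mono) auto
    also have "C * real M / (real M * real M) / e = C / (real M * e)"
      using Mpos by (simp add: field_simps)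
    also have "\<dots> \<le> e / 4"
    proof -
      have "4 * C \<le> real M * (e * e)" using MC e by (simp add: field_simps)
      then show ?thesis using e Mpos by (simp add: field_simps)
    qed
    finally have le: "(\<integral>x. \<bar>S r M x / real M\<bar> \<partial>unit_lebesgue) \<le> e/4 + e/4" by simp
    then show "norm ((\<integral>x. \<bar>S r M x / real M\<bar> \<partial>unit_lebesgue) - 0) < e"
    proof -
      have nn: "0 \<le> (\<integral>x. \<bar>S r M x / real M\<bar> \<partial>unit_lebesgue)" by (rule integral_nonneg_AE) auto
      show ?thesis using le nn e
        by (simp only: real_norm_def diff_zero abs_less_iff) linarith
    qed
  qed
qed

lemma interp:
  fixes s :: "nat \<Rightarrow> real"
  assumes step: "\<And>M. \<bar>s (Suc M) - s M\<bar> \<le> B"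
    and sub: "(\<lambda>k. s ((Suc k)^2) / real ((Suc k)^2)) \<longlonglongrightarrow> 0"
  shows "(\<lambda>M. s M / real M) \<longlonglongrightarrow> 0"
proof -
  have B0: "0 \<le> B" using step[of 0] by linarith
  have diff: "\<bar>s (M + j) - s M\<bar> \<le> B * real j" for M j
  proof (induction j)
    case 0 then show ?case by simp
  next
    case (Suc j)
    have "\<bar>s (M + Suc j) - s M\<bar> \<le> \<bar>s (Suc (M + j)) - s (M + j)\<bar> + \<bar>s (M + j) - s M\<bar>" by simp
    also have "\<dots> \<le> B + B * real j" using step[of "M + j"] Suc by linarith
    finally show ?case by (simp add: algebra_simps)
  qed
  define h where "h j = \<bar>s ((Suc j)^2) / real ((Suc j)^2)\<bar> + 3 * B * (1 / real (Suc j))" for j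
  have h0: "h \<longlonglongrightarrow> 0"
  proof -
    have "(\<lambda>j. \<bar>s ((Suc j)^2) / real ((Suc j)^2)\<bar>) \<longlonglongrightarrow> 0" using tendsto_rabs_zero[OF sub] .
    moreover have "(\<lambda>j. 3 * B * (1 / real (Suc j))) \<longlonglongrightarrow> 0"
      by (intro tendsto_mult_right_zero LIMSEQ_Suc[OF lim_1_over_n])
    ultimately show ?thesis unfolding h_def by (rule tendsto_add_zero)
  qed
  have fl: "filterlim (\<lambda>M. floor_sqrt M - 1) at_top sequentially"
  proof (subst filterlim_at_top, intro allI)
    fix Z :: nat
    show "eventually (\<lambda>M. Z \<le> floor_sqrt M - 1) sequentially"
      unfolding eventually_sequentially
    proof (intro exI allI impI)
      fix M assume "(Suc Z)^2 \<le> M"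
      then have "Suc Z \<le> floor_sqrt M" by (rule le_floor_sqrtI)
      then show "Z \<le> floor_sqrt M - 1" by simp
    qed
  qed
  have hc: "(\<lambda>M. h (floor_sqrt M - 1)) \<longlonglongrightarrow> 0" by (rule filterlim_compose[OF h0 fl])
  show ?thesis
  proof (rule Lim_null_comparison[OF _ hc])
    show "eventually (\<lambda>M. norm (s M / real M) \<le> h (floor_sqrt M - 1)) sequentially"
      unfolding eventually_sequentially
    proof (intro exI allI impI)
      fix M :: nat assume M: "1 \<le> M"
      define k where "k = floor_sqrt M"
      have k1: "k \<ge> 1" unfolding k_def using M by (simp add: le_floor_sqrtI)
      have kM: "k^2 \<le> M" unfolding k_def by simp
      have Mk: "M < (Suc k)^2" unfolding k_def by (rule Suc_floor_sqrt_power2_gt)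
      have Suck: "Suc (k - 1) = k" using k1 by simp
      have gap: "M - k^2 \<le> 2 * k" using Mk by (simp add: power2_eq_square)
      have rk: "real (k^2) \<ge> real k" using k1 by (simp add: power2_eq_square)
      have rM: "real M \<ge> real (k^2)" using kM by linarith
      have kpos: "real k > 0" using k1 by simp
      have d: "\<bar>s M - s (k^2)\<bar> \<le> B * (2 * real k)"
      proof -
        have "\<bar>s (k^2 + (M - k^2)) - s (k^2)\<bar> \<le> B * real (M - k^2)" by (rule diff)
        moreover have "k^2 + (M - k^2) = M" using kM by simp
        moreover have "real (M - k^2) \<le> 2 * real k" using gap by linarith
        ultimately show ?thesis using B0 by (metis mult_left_mono order.trans)
      qed
      have "norm (s M / real M) \<le> \<bar>s (k^2)\<bar> / real M + \<bar>s M - s (k^2)\<bar> / real M"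
        using kpos rM by (simp add: abs_div add_divide_distrib[symmetric] divide_right_mono abs_triangle_ineq2_sym)
      also have "\<bar>s (k^2)\<bar> / real M \<le> \<bar>s (k^2)\<bar> / real (k^2)"
        using rM kpos M by (intro divide_left_mono) (auto intro!: mult_pos_pos)
      also have "\<bar>s M - s (k^2)\<bar> / real M \<le> B * (2 * real k) / real (k^2)"
        using rM kpos d by (intro frac_le) auto
      also have "B * (2 * real k) / real (k^2) = 2 * B * (1 / real k)"
        using kpos by (simp add: power2_eq_square field_simps)
      also have "2 * B * (1 / real k) \<le> 3 * B * (1 / real k)" using B0 kpos by (intro mult_right_mono) auto
      finally have "norm (s M / real M) \<le> \<bar>s (k^2) / real (k^2)\<bar> + 3 * B * (1 / real k)"
        by (simp add: abs_div)
      then show "norm (s M / real M) \<le> h (floor_sqrt M - 1)"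
        unfolding h_def k_def[symmetric] Suck .
    qed
  qed
qed


lemma S_step: "S r (Suc M) x - S r M x = Z r (Suc M) x"
  unfolding S_def by (simp add: sum.cl_ivl_Suc)

lemma AEconv:
  assumes r: "\<bar>r\<bar> < 1"
  shows "AE x in unit_lebesgue. (\<lambda>M. S r M x / real M) \<longlonglongrightarrow> 0"
proof -
  define C where "C = 2 * sig r / (1 - \<bar>r\<bar>)"
  define g where "g k x = (S r ((Suc k)^2) x / real ((Suc k)^2))^2" for k x
  have gm[measurable]: "g k \<in> borel_measurable unit_lebesgue" for k unfolding g_def using r by measurable
  have gnn: "0 \<le> g k x" for k x unfolding g_def by simp
  have gi: "integrable unit_lebesgue (g k)" for k
    unfolding g_def using int_SS[OF r] by (simp add: power2_eq_square)
  have ig: "(\<integral>x. g k x \<partial>unit_lebesgue) \<le> C / real ((Suc k)^2)" for k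
  proof -
    define m where "m = real ((Suc k)^2)"
    have m0: "m > 0" unfolding m_def by simp
    have "(\<integral>x. g k x \<partial>unit_lebesgue) = (\<integral>x. (S r ((Suc k)^2) x)^2 \<partial>unit_lebesgue) / (m * m)"
      unfolding g_def m_def[symmetric] by (simp add: power_divide power2_eq_square)
    also have "\<dots> \<le> C * m / (m * m)"
      using S2[OF r, of "(Suc k)^2"] m0 unfolding C_def m_def[symmetric] by (intro divide_right_mono) auto
    also have "\<dots> = C / m" using m0 by simp
    finally show ?thesis unfolding m_def .
  qed
  have sumC: "summable (\<lambda>k. C / real ((Suc k)^2))"
  proof -
    have "summable (\<lambda>n. inverse (real n ^ 2))" by (rule inverse_power_summable) simp
    then have "summable (\<lambda>n. inverse (real (Suc n) ^ 2))" by (subst summable_Suc_iff)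
    then have "summable (\<lambda>n. C * inverse (real (Suc n) ^ 2))" by (rule summable_mult)
    then show ?thesis by (simp add: divide_inverse)
  qed
  have C0: "0 \<le> C" unfolding C_def using r sig_nonneg by simp
  have "(\<integral>\<^sup>+ x. (\<Sum>k. ennreal (g k x)) \<partial>unit_lebesgue) = (\<Sum>k. \<integral>\<^sup>+ x. ennreal (g k x) \<partial>unit_lebesgue)"
    by (rule nn_integral_suminf) measurable
  also have "\<dots> = (\<Sum>k. ennreal (\<integral>x. g k x \<partial>unit_lebesgue))"
    by (subst nn_integral_eq_integral) (auto simp: gi gnn)
  also have "\<dots> \<le> (\<Sum>k. ennreal (C / real ((Suc k)^2)))"
    by (intro suminf_le summableI ennreal_leI ig)
  also have "\<dots> = ennreal (\<Sum>k. C / real ((Suc k)^2))"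
    by (rule suminf_ennreal2) (use sumC C0 in auto)
  also have "\<dots> < \<infinity>" by simp
  finally have fin: "(\<integral>\<^sup>+ x. (\<Sum>k. ennreal (g k x)) \<partial>unit_lebesgue) \<noteq> \<infinity>" by simp
  have "AE x in unit_lebesgue. (\<Sum>k. ennreal (g k x)) \<noteq> \<infinity>"
    by (rule nn_integral_PInf_AE[OF _ fin]) measurable
  moreover have "AE x in unit_lebesgue. x \<in> {0..1}" using AE_space[of unit_lebesgue] by simp
  ultimately show ?thesis
  proof eventually_elim
    case (elim x)
    have "summable (\<lambda>k. g k x)" by (rule summable_suminf_not_top) (use gnn elim in auto)
    then have "(\<lambda>k. g k x) \<longlonglongrightarrow> 0" by (rule summable_LIMSEQ_zero)
    then have "(\<lambda>k. sqrt (g k x)) \<longlonglongrightarrow> sqrt 0" by (rule tendsto_real_sqrt)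
    then have "(\<lambda>k. \<bar>S r ((Suc k)^2) x / real ((Suc k)^2)\<bar>) \<longlonglongrightarrow> 0" unfolding g_def by simp
    then have sub: "(\<lambda>k. S r ((Suc k)^2) x / real ((Suc k)^2)) \<longlonglongrightarrow> 0"
      by (rule tendsto_rabs_zero_cancel)
    show ?case
    proof (rule interp[OF _ sub])
      fix M show "\<bar>S r (Suc M) x - S r M x\<bar> \<le> BV r"
        unfolding S_step Z_def using VB[OF r] elim by auto
    qed
  qed
qed

theorem theorem1p7:
  fixes r :: real
  assumes "0 < \<bar>r\<bar>" and "\<bar>r\<bar> < 1"
  shows "(\<exists>L :: real \<Rightarrow> real.
            L \<in> borel_measurable unit_lebesgue
          \<and> \<not> (\<exists>c. AE x in unit_lebesgue. L x = c)
          \<and> integrable unit_lebesgue L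
          \<and> integral\<^sup>L unit_lebesgue L = 1
          \<and> weak_conv_m (\<lambda>N. distr unit_lebesgue borel (remq r N))
                        (distr unit_lebesgue borel L))
       \<and> (AE x in unit_lebesgue.
            (\<lambda>N'. (\<Sum>N\<in>{1..N'}. remq r N x) / real N') \<longlonglongrightarrow> 1)
       \<and> (\<forall>N'. integrable unit_lebesgue (\<lambda>x. (\<Sum>N\<in>{1..N'}. remq r N x) / real N'))
       \<and> ((\<lambda>N'. \<integral>x. \<bar>(\<Sum>N\<in>{1..N'}. remq r N x) / real N' - 1\<bar> \<partial>unit_lebesgue)
            \<longlonglongrightarrow> 0)"
proof (intro conjI)
  note r0 = assms(1) and r = assms(2)
  show "\<exists>L :: real \<Rightarrow> real.
            L \<in> borel_measurable unit_lebesgue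
          \<and> \<not> (\<exists>c. AE x in unit_lebesgue. L x = c)
          \<and> integrable unit_lebesgue L
          \<and> integral\<^sup>L unit_lebesgue L = 1
          \<and> weak_conv_m (\<lambda>N. distr unit_lebesgue borel (remq r N))
                        (distr unit_lebesgue borel L)"
    by (rule part1[OF r0 r])
  have ev: "eventually (\<lambda>M. S r M x / real M + 1 = (\<Sum>N\<in>{1..M}. remq r N x) / real M) sequentially" for x
    unfolding eventually_sequentially by (intro exI[of _ 1] allI impI) (rule avg_eq[OF r0 r, symmetric], assumption)
  show "AE x in unit_lebesgue. (\<lambda>N'. (\<Sum>N\<in>{1..N'}. remq r N x) / real N') \<longlonglongrightarrow> 1"
    using AEconv[OF r]
  proof eventually_elim
    case (elim x)
    then have "(\<lambda>M. S r M x / real M + 1) \<longlonglongrightarrow> 0 + 1" by (intro tendsto_add tendsto_const)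
    then show ?case using tendsto_cong[OF ev[of x]] by simp
  qed
  show "\<forall>N'. integrable unit_lebesgue (\<lambda>x. (\<Sum>N\<in>{1..N'}. remq r N x) / real N')"
  proof
    fix M :: nat
    show "integrable unit_lebesgue (\<lambda>x. (\<Sum>N\<in>{1..M}. remq r N x) / real M)"
    proof (cases "M = 0")
      case True then show ?thesis by simp
    next
      case False
      then have "(\<lambda>x. (\<Sum>N\<in>{1..M}. remq r N x) / real M) = (\<lambda>x. S r M x / real M + 1)"
        using avg_eq[OF r0 r, of M] by (intro ext) simp
      then show ?thesis using int_S[OF r, of M] by simp
    qed
  qed
  have ev2: "eventually (\<lambda>M. (\<integral>x. \<bar>S r M x / real M\<bar> \<partial>unit_lebesgue) = (\<integral>x. \<bar>(\<Sum>N\<in>{1..M}. remq r N x) / real M - 1\<bar> \<partial>unit_lebesgue)) sequentially"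
    unfolding eventually_sequentially
  proof (intro exI[of _ 1] allI impI)
    fix M :: nat assume M: "1 \<le> M"
    have "(\<Sum>N\<in>{1..M}. remq r N x) / real M - 1 = S r M x / real M" for x
      using avg_eq[OF r0 r M, of x] by simp
    then show "(\<integral>x. \<bar>S r M x / real M\<bar> \<partial>unit_lebesgue) = (\<integral>x. \<bar>(\<Sum>N\<in>{1..M}. remq r N x) / real M - 1\<bar> \<partial>unit_lebesgue)"
      by (simp only:)
  qed
  show "(\<lambda>N'. \<integral>x. \<bar>(\<Sum>N\<in>{1..N'}. remq r N x) / real N' - 1\<bar> \<partial>unit_lebesgue) \<longlonglongrightarrow> 0"
    using tendsto_cong[OF ev2] L1conv[OF r] by simp
qed

end
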